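(* For $\vec r\in\mathbb{R}^3$ with $|\vec r|\le1$ let $\rho(\vec r)=\tfrac12(I+\vec r\cdot\vec\sigma)$. Let $\vec r_1,\vec r_2$ be in the closed unit ball and linearly dependent (so $\rho(\vec r_1),\rho(\vec r_2)$ commute), and set $m=\max\{|\vec r_1|,|\vec r_2|\}$. Then for every $p\ge1$ $$D^p_{\mathrm{symm},p}(\rho(\vec r_1),\rho(\vec r_2))=2^p\Big(1+\tfrac12|\vec r_1-\vec r_2|-\sqrt{\big(1+\tfrac{\vec r_1\cdot\vec r_2}{m}\big)(1-m)}\Big),$$ with the convention that $\tfrac{\vec r_1\cdot\vec r_2}{m}=0$ when $m=0$.
   Context: Qubit setting: $\mathcal{H}=\mathbb{C}^2$, $\mathcal{H}^*$ is identified with $\mathbb{C}^2$ via the dual basis, and $A^T$ is the usual matrix transpose; operators on $\mathcal{H}\otimes\mathcal{H}^*$ are $4\times4$ matrices in the basis $e_1\otimes e_1^*,e_1\otimes e_2^*,e_2\otimes e_1^*,e_2\otimes e_2^*$. Pauli matrices: $\sigma_1=\sigma_x=\begin{pmatrix}0&1\\1&0\end{pmatrix}$, $\sigma_2=\sigma_y=\begin{pmatrix}0&-i\\i&0\end{pmatrix}$, $\sigma_3=\sigma_z=\begin{pmatrix}1&0\\0&-1\end{pmatrix}$, and $\vec\sigma=(\sigma_1,\sigma_2,\sigma_3)$. The set of couplings of states $\rho,\omega$ is $\mathcal{C}(\rho,\omega)=\{\Pi\in\mathcal{S}(\mathcal{H}\otimes\mathcal{H}^* ):\mathrm{tr}_{\mathcal{H}^*}[\Pi]=\omega,\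 \mathrm{tr}_{\mathcal{H}}[\Pi]=\rho^T\}$. For $p\ge1$, $C_{\mathrm{symm},p}=\sum_{k=1}^3|\sigma_k\otimes I^T-I\otimes\sigma_k^T|^p$, which equals the matrix $\begin{pmatrix}2^p&0&0&-2^p\\0&2^{p+1}&0&0\\0&0&2^{p+1}&0\\-2^p&0&0&2^p\end{pmatrix}$, and $D_{\mathrm{symm},p}(\rho,\omega)=\big(\min_{\Pi\in\mathcal{C}(\rho,\omega)}\mathrm{tr}[\Pi C_{\mathrm{symm},p}]\big)^{1/p}$. *)

theory Defs
  imports "HOL-Analysis.Analysis"
begin

text \<open>Qubit operators are complex 2x2 matrices indexed by the type 2.
  Operators on H (x) H^* are indexed by pairs (i,j) :: 2 x 2, where (i,j)
  stands for the basis vector e_i (x) e_j^*; the lexicographic order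
  (1,1),(1,2),(2,1),(2,2) is the basis order of the paper.\<close>

definition sigma1 :: "complex^2^2" where
  "sigma1 = (\<chi> i j. if i \<noteq> j then 1 else 0)"

definition sigma2 :: "complex^2^2" where
  "sigma2 = (\<chi> i j. if i = 1 \<and> j = 2 then - \<i> else if i = 2 \<and> j = 1 then \<i> else 0)"

definition sigma3 :: "complex^2^2" where
  "sigma3 = (\<chi> i j. if i = j then (if i = 1 then 1 else -1) else 0)"

definition bloch_state :: "real^3 \<Rightarrow> complex^2^2" where
  "bloch_state r = (1/2) *\<^sub>R (mat 1 + (r$1) *\<^sub>R sigma1 + (r$2) *\<^sub>R sigma2 + (r$3) *\<^sub>R sigma3)"

definition psd :: "complex^'n^'n \<Rightarrow> bool" where
  "psd A \<longleftrightarrow> (\<forall>i j. A$j$i = cnj (A$i$j)) \<and>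
     (\<forall>v::complex^'n. 0 \<le> Re (\<Sum>i\<in>UNIV. \<Sum>j\<in>UNIV. cnj (v$i) * A$i$j * v$j))"

definition is_state :: "complex^'n^'n \<Rightarrow> bool" where
  "is_state A \<longleftrightarrow> psd A \<and> trace A = 1"

definition ptrace_dual :: "complex^('a::finite \<times> 'a)^('a \<times> 'a) \<Rightarrow> complex^'a^'a" where
  "ptrace_dual P = (\<chi> i k. \<Sum>j\<in>UNIV. P$(i,j)$(k,j))"

definition ptrace_H :: "complex^('a::finite \<times> 'a)^('a \<times> 'a) \<Rightarrow> complex^'a^'a" where
  "ptrace_H P = (\<chi> j l. \<Sum>i\<in>UNIV. P$(i,j)$(i,l))"

definition couplings :: "complex^2^2 \<Rightarrow> complex^2^2 \<Rightarrow> (complex^(2\<times>2)^(2\<times>2)) set" where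
  "couplings \<rho> \<omega> = {P. is_state P \<and> ptrace_dual P = \<omega> \<and> ptrace_H P = transpose \<rho>}"

definition C_symm :: "real \<Rightarrow> complex^(2\<times>2)^(2\<times>2)" where
  "C_symm p = (\<chi> a b.
      if a = b then (if a = (1,1) \<or> a = (2,2) then complex_of_real (2 powr p)
                     else complex_of_real (2 powr (p + 1)))
      else if (a = (1,1) \<and> b = (2,2)) \<or> (a = (2,2) \<and> b = (1,1)) then - complex_of_real (2 powr p)
      else 0)"

text \<open>D_symm,p = (min over couplings of tr[Pi C])^(1/p); the minimum is rendered as Inf
  (the trace is real for Hermitian Pi, C, so we take its real part).\<close>
definition D_symm :: "real \<Rightarrow> complex^2^2 \<Rightarrow> complex^2^2 \<Rightarrow> real" where
  "D_symm p \<rho> \<omega> = (Inf {Re (trace (P ** C_symm p)) | P. P \<in> couplings \<rho> \<omega>}) powr (1 / p)"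

end

theory Submission
  imports Defs
begin


definition bf :: "complex^'n^'n \<Rightarrow> complex^'n \<Rightarrow> complex^'n \<Rightarrow> complex" where
  "bf P w z = (\<Sum>i\<in>UNIV. \<Sum>j\<in>UNIV. cnj (w$i) * P$i$j * z$j)"

abbreviation qf where "qf P w \<equiv> bf P w w"

definition ip :: "complex^'n \<Rightarrow> complex^'n \<Rightarrow> complex" where
  "ip x y = (\<Sum>i\<in>UNIV. cnj (x$i) * y$i)"

definition outer :: "complex^'n \<Rightarrow> complex^'n \<Rightarrow> complex^'n^'n" where
  "outer z w = (\<chi> a b. z$a * cnj (w$b))"

definition tens :: "complex^'a \<Rightarrow> complex^'a \<Rightarrow> complex^('a::finite \<times> 'a)" where
  "tens x y = (\<chi> a. x$(fst a) * cnj (y$(snd a)))"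

lemma bf_add1: "bf P (a + b) c = bf P a c + bf P b c"
  by (simp add: bf_def algebra_simps sum.distrib)
lemma bf_add2: "bf P a (b + c) = bf P a b + bf P a c"
  by (simp add: bf_def algebra_simps sum.distrib)
lemma bf_scale1: "bf P (r *\<^sub>R a) c = of_real r * bf P a c"
  by (simp add: bf_def sum_distrib_left, simp add: scaleR_conv_of_real mult_ac)
lemma bf_scale2: "bf P a (r *\<^sub>R c) = of_real r * bf P a c"
  by (simp add: bf_def sum_distrib_left, simp add: scaleR_conv_of_real mult_ac)
lemma bf_Padd: "bf (P + Q) a c = bf P a c + bf Q a c"
  by (simp add: bf_def algebra_simps sum.distrib)
lemma bf_Pscale: "bf (r *\<^sub>R P) a c = of_real r * bf P a c"
  by (simp add: bf_def sum_distrib_left, simp add: scaleR_conv_of_real mult_ac)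

lemma psd_qf: "psd P \<Longrightarrow> 0 \<le> Re (qf P w)"
  unfolding psd_def bf_def by blast

lemma psd_herm: "psd P \<Longrightarrow> P$j$i = cnj (P$i$j)"
  unfolding psd_def by blast

lemma bf_outer: "bf (outer z w) a c = ip a z * ip w c"
proof -
  have "bf (outer z w) a c = (\<Sum>i\<in>UNIV. \<Sum>j\<in>UNIV. (cnj (a$i) * z$i) * (cnj (w$j) * c$j))"
    by (simp add: bf_def outer_def mult_ac)
  then show ?thesis by (simp add: ip_def sum_product)
qed

lemma ip_cnj: "cnj (ip x y) = ip y x"
  unfolding ip_def cnj_sum by (intro sum.cong refl) (simp add: mult.commute)

lemma psd_outer: "psd (outer z z)"
proof -
  have "0 \<le> Re (qf (outer z z) v)" for v
  proof -
    have "ip z v = cnj (ip v z)" by (simp add: ip_cnj)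
    then show ?thesis by (simp add: bf_outer)
  qed
  moreover have "(outer z z)$j$i = cnj ((outer z z)$i$j)" for i j by (simp add: outer_def algebra_simps)
  ultimately show ?thesis unfolding psd_def bf_def by blast
qed

lemma psd_add: "psd P \<Longrightarrow> psd Q \<Longrightarrow> psd (P + Q)"
proof -
  assume a: "psd P" "psd Q"
  have "0 \<le> Re (qf (P + Q) v)" for v using psd_qf[OF a(1), of v] psd_qf[OF a(2), of v]
    by (simp add: bf_Padd)
  moreover have "(P + Q)$j$i = cnj ((P + Q)$i$j)" for i j using psd_herm[OF a(1), of i j] psd_herm[OF a(2), of i j] by simp
  ultimately show ?thesis unfolding psd_def bf_def by blast
qed

lemma psd_scale: "psd P \<Longrightarrow> 0 \<le> r \<Longrightarrow> psd (r *\<^sub>R P)"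
proof -
  assume a: "psd P" "0 \<le> r"
  have "0 \<le> Re (qf (r *\<^sub>R P) v)" for v using psd_qf[OF a(1), of v] a(2)
    by (simp add: bf_Pscale)
  moreover have "(r *\<^sub>R P)$j$i = cnj ((r *\<^sub>R P)$i$j)" for i j using psd_herm[OF a(1), of i j] by simp
  ultimately show ?thesis unfolding psd_def bf_def by blast
qed

lemma sum_pair: "(\<Sum>a\<in>(UNIV::('a::finite\<times>'b::finite) set). f a) = (\<Sum>i\<in>UNIV. \<Sum>j\<in>UNIV. f (i,j))"
  unfolding UNIV_Times_UNIV[symmetric] sum.cartesian_product by simp

lemma sum_delta_mult: fixes f :: "'a::finite \<Rightarrow> complex" shows "(\<Sum>l\<in>UNIV. f l * (if j = l then 1 else 0)) = (f j :: complex)"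
proof -
  have "(\<Sum>l\<in>UNIV. f l * (if j = l then 1 else 0)) = (\<Sum>l\<in>UNIV. if j = l then f l else 0)"
    by (rule sum.cong) auto
  then show ?thesis by (simp add: sum.delta sum.delta')
qed

lemma sum_delta_mult': fixes f :: "'a::finite \<Rightarrow> complex" shows "(\<Sum>l\<in>UNIV. f l * (if l = j then 1 else 0)) = (f j :: complex)"
proof -
  have "(\<Sum>l\<in>UNIV. f l * (if l = j then 1 else 0)) = (\<Sum>l\<in>UNIV. if l = j then f l else 0)"
    by (rule sum.cong) auto
  then show ?thesis by (simp add: sum.delta sum.delta')
qed

lemma ptrace_dual_outer_tens:
  "ptrace_dual (outer (tens x y) (tens x' y')) = (\<chi> i k. x$i * cnj (x'$k) * ip y y')"
  by (simp add: vec_eq_iff ptrace_dual_def outer_def tens_def ip_def sum_distrib_left mult_ac)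

lemma ptrace_H_outer_tens:
  "ptrace_H (outer (tens x y) (tens x' y')) = (\<chi> j l. ip x' x * cnj (y$j) * y'$l)"
  by (simp add: vec_eq_iff ptrace_H_def outer_def tens_def ip_def sum_distrib_left sum_distrib_right mult_ac)

lemma ptrace_dual_add: "ptrace_dual (A + B) = ptrace_dual A + ptrace_dual B"
  by (simp add: vec_eq_iff ptrace_dual_def sum.distrib)
lemma ptrace_dual_scale: "ptrace_dual (r *\<^sub>R A) = r *\<^sub>R ptrace_dual A"
  by (simp add: vec_eq_iff ptrace_dual_def scaleR_sum_right)
lemma ptrace_H_add: "ptrace_H (A + B) = ptrace_H A + ptrace_H B"
  by (simp add: vec_eq_iff ptrace_H_def sum.distrib)
lemma ptrace_H_scale: "ptrace_H (r *\<^sub>R A) = r *\<^sub>R ptrace_H A"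
  by (simp add: vec_eq_iff ptrace_H_def scaleR_sum_right)

lemma trace_ptrace: "trace P = trace (ptrace_dual P)"
  by (simp add: trace_def ptrace_dual_def sum_pair)

lemma qf_dual:
  assumes c: "\<forall>j l. y$j * cnj (y$l) + z$j * cnj (z$l) = (if j = l then 1 else 0)"
  shows "qf P (tens x y) + qf P (tens x z) = bf (ptrace_dual P) x x"
proof -
  have "qf P (tens x y) + qf P (tens x z) = (\<Sum>i\<in>UNIV. \<Sum>j\<in>UNIV. \<Sum>k\<in>UNIV. \<Sum>l\<in>UNIV.
     cnj (x$i) * x$k * P$(i,j)$(k,l) * (y$j * cnj (y$l) + z$j * cnj (z$l)))"
    unfolding bf_def tens_def sum_pair by (simp add: distrib_left sum.distrib mult_ac)
  also have "\<dots> = (\<Sum>i\<in>UNIV. \<Sum>j\<in>UNIV. \<Sum>k\<in>UNIV. \<Sum>l\<in>UNIV.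
     cnj (x$i) * x$k * P$(i,j)$(k,l) * (if j = l then 1 else 0))"
    using c by simp
  also have "\<dots> = (\<Sum>i\<in>UNIV. \<Sum>j\<in>UNIV. \<Sum>k\<in>UNIV. cnj (x$i) * x$k * P$(i,j)$(k,j))"
    by (simp only: sum_delta_mult)
  also have "\<dots> = (\<Sum>i\<in>UNIV. \<Sum>k\<in>UNIV. \<Sum>j\<in>UNIV. cnj (x$i) * x$k * P$(i,j)$(k,j))"
    by (intro sum.cong refl sum.swap)
  also have "\<dots> = (\<Sum>i\<in>UNIV. \<Sum>k\<in>UNIV. cnj (x$i) * ptrace_dual P$i$k * x$k)"
    by (simp add: ptrace_dual_def sum_distrib_left sum_distrib_right mult_ac)
  also have "\<dots> = bf (ptrace_dual P) x x" by (simp add: bf_def)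
  finally show ?thesis .
qed

lemma qf_H:
  assumes c: "\<forall>j l. x$j * cnj (x$l) + z$j * cnj (z$l) = (if j = l then 1 else 0)"
  shows "qf P (tens x y) + qf P (tens z y) = (\<Sum>j\<in>UNIV. \<Sum>l\<in>UNIV. y$j * ptrace_H P$j$l * cnj (y$l))"
proof -
  have "qf P (tens x y) + qf P (tens z y) = (\<Sum>i\<in>UNIV. \<Sum>j\<in>UNIV. \<Sum>k\<in>UNIV. \<Sum>l\<in>UNIV.
     y$j * cnj (y$l) * P$(i,j)$(k,l) * (x$k * cnj (x$i) + z$k * cnj (z$i)))"
    unfolding bf_def tens_def sum_pair by (simp add: distrib_left sum.distrib mult_ac)
  also have "\<dots> = (\<Sum>i\<in>UNIV. \<Sum>j\<in>UNIV. \<Sum>l\<in>UNIV. \<Sum>k\<in>UNIV.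
     y$j * cnj (y$l) * P$(i,j)$(k,l) * (x$k * cnj (x$i) + z$k * cnj (z$i)))"
    by (intro sum.cong refl sum.swap)
  also have "\<dots> = (\<Sum>i\<in>UNIV. \<Sum>j\<in>UNIV. \<Sum>l\<in>UNIV. \<Sum>k\<in>UNIV.
     y$j * cnj (y$l) * P$(i,j)$(k,l) * (if k = i then 1 else 0))"
    using c by simp
  also have "\<dots> = (\<Sum>i\<in>UNIV. \<Sum>j\<in>UNIV. \<Sum>l\<in>UNIV. y$j * cnj (y$l) * P$(i,j)$(i,l))"
    by (simp only: sum_delta_mult')
  also have "\<dots> = (\<Sum>j\<in>UNIV. \<Sum>i\<in>UNIV. \<Sum>l\<in>UNIV. y$j * cnj (y$l) * P$(i,j)$(i,l))"
    by (rule sum.swap)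
  also have "\<dots> = (\<Sum>j\<in>UNIV. \<Sum>l\<in>UNIV. \<Sum>i\<in>UNIV. y$j * cnj (y$l) * P$(i,j)$(i,l))"
    by (intro sum.cong refl sum.swap)
  also have "\<dots> = (\<Sum>j\<in>UNIV. \<Sum>l\<in>UNIV. y$j * ptrace_H P$j$l * cnj (y$l))"
    by (simp add: ptrace_H_def sum_distrib_left sum_distrib_right mult_ac)
  finally show ?thesis .
qed

lemma two_ne: "(1::2) \<noteq> 2" "(2::2) \<noteq> 1" by simp_all

definition idv :: "complex^(2\<times>2)" where
  "idv = (\<chi> a. if fst a = snd a then 1 else 0)"

lemma cost_formula:
  assumes "trace P = 1"
  shows "trace (P ** C_symm p) = of_real (2 powr p) * (2 - bf P idv idv)"
proof -
  have t: "P$(1,1)$(1,1) + P$(1,2)$(1,2) + P$(2,1)$(2,1) + P$(2,2)$(2,2) = 1"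
    using assms by (simp add: trace_def sum_pair sum_2 add.assoc)
  have p1: "(2::real) powr (1 + p) = 2 * 2 powr p" by (simp add: powr_add)
  have t': "P$(1,1)$(1,1) = 1 - P$(1,2)$(1,2) - P$(2,1)$(2,1) - P$(2,2)$(2,2)" using t by (simp add: algebra_simps)
  show ?thesis
    by (simp add: t' trace_def matrix_matrix_mult_def sum_pair sum_2 C_symm_def bf_def idv_def p1 algebra_simps)
qed

lemma discr:
  fixes A B c :: real
  assumes h: "\<And>l. 0 \<le> A + l * c + l^2 * B" and A: "0 \<le> A" and B: "0 \<le> B"
  shows "c \<le> 2 * sqrt (A * B)"
proof (cases "B = 0")
  case True
  show ?thesis
  proof (rule ccontr)
    assume "\<not> ?thesis"
    then have c: "c > 0" using True by simp
    have "0 \<le> A + (-(A+1)/c) * c" using h[of "-(A+1)/c"] True by simp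
    also have "\<dots> = -1" using c by (simp add: field_simps)
    finally show False by simp
  qed
next
  case False
  then have Bp: "B > 0" using B by simp
  have "0 \<le> A + (-c/(2*B)) * c + (-c/(2*B))^2 * B" by (rule h)
  also have "\<dots> = A - c^2/(4*B)" using Bp by (simp add: field_simps power2_eq_square)
  finally have "c^2 \<le> 4 * A * B" using Bp by (simp add: field_simps)
  then have "sqrt (c^2) \<le> sqrt (4 * A * B)" by (rule real_sqrt_le_mono)
  also have "sqrt (4 * A * B) = 2 * sqrt (A * B)" by (simp add: real_sqrt_mult)
  finally show ?thesis by simp
qed

lemma cs_psd:
  assumes "psd P"
  shows "Re (bf P a b + bf P b a) \<le> 2 * sqrt (Re (qf P a) * Re (qf P b))"
proof (rule discr)
  fix l :: real
  have "0 \<le> Re (qf P (a + l *\<^sub>R b))" by (rule psd_qf[OF assms])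
  also have "Re (qf P (a + l *\<^sub>R b)) = Re (qf P a) + l * Re (bf P a b + bf P b a) + l^2 * Re (qf P b)"
    by (simp add: bf_add1 bf_add2 bf_scale1 bf_scale2 algebra_simps power2_eq_square)
  finally show "0 \<le> Re (qf P a) + l * Re (bf P a b + bf P b a) + l^2 * Re (qf P b)" .
qed (use psd_qf[OF assms] in auto)

lemma ip_add2: "ip x (y + z) = ip x y + ip x z"
  by (simp add: ip_def algebra_simps sum.distrib)
lemma ip_scale2: "ip x (r *\<^sub>R y) = of_real r * ip x y"
  by (simp add: ip_def sum_distrib_left, simp add: scaleR_conv_of_real mult_ac)
lemma ip_add1: "ip (x + y) z = ip x z + ip y z"
  by (simp add: ip_def algebra_simps sum.distrib)
lemma ip_scale1: "ip (r *\<^sub>R x) y = of_real r * ip x y"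
  by (simp add: ip_def sum_distrib_left, simp add: scaleR_conv_of_real mult_ac)

lemma ip_idv_tens: "ip idv (tens x y) = ip y x"
  by (simp add: ip_def idv_def tens_def sum_pair sum_2 mult.commute)

lemma ip_tens_idv: "ip (tens x y) idv = ip x y"
  by (simp add: ip_def idv_def tens_def sum_pair sum_2 mult.commute)

lemma idv_tens:
  assumes "\<forall>j l. u$j * cnj (u$l) + v$j * cnj (v$l) = (if j = l then 1 else 0)"
  shows "idv = tens u u + tens v v"
  using assms by (simp add: vec_eq_iff idv_def tens_def)

lemma bf_transpose: "(\<Sum>j\<in>UNIV. \<Sum>l\<in>UNIV. y$j * transpose M$j$l * cnj (y$l)) = bf M y y"
proof -
  have "(\<Sum>j\<in>UNIV. \<Sum>l\<in>UNIV. y$j * transpose M$j$l * cnj (y$l)) =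
        (\<Sum>l\<in>UNIV. \<Sum>j\<in>UNIV. y$j * transpose M$j$l * cnj (y$l))" by (rule sum.swap)
  then show ?thesis by (simp add: bf_def transpose_def mult_ac)
qed

lemma lower:
  fixes u v :: "complex^2" and s t p :: real
  assumes uu: "ip u u = 1" and vv: "ip v v = 1" and uv: "ip u v = 0"
    and cmp: "\<forall>j l. u$j * cnj (u$l) + v$j * cnj (v$l) = (if j = l then 1 else 0)"
    and rho: "\<rho> = ((1+s)/2) *\<^sub>R outer u u + ((1-s)/2) *\<^sub>R outer v v"
    and om: "\<omega> = ((1+t)/2) *\<^sub>R outer u u + ((1-t)/2) *\<^sub>R outer v v"
    and P: "P \<in> couplings \<rho> \<omega>"
  shows "2 powr p * (2 - min ((1+t)/2) ((1+s)/2) - min ((1-t)/2) ((1-s)/2)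
           - 2 * sqrt (min ((1+t)/2) ((1+s)/2) * min ((1-t)/2) ((1-s)/2))) \<le> Re (trace (P ** C_symm p))"
proof -
  define x0 where "x0 = min ((1+t)/2) ((1+s)/2)"
  define y0 where "y0 = min ((1-t)/2) ((1-s)/2)"
  have psdP: "psd P" and trP: "trace P = 1" and pd: "ptrace_dual P = \<omega>" and pH: "ptrace_H P = transpose \<rho>"
    using P by (auto simp: couplings_def is_state_def)
  have vu: "ip v u = 0" using uv ip_cnj[of u v] by simp
  have ou: "bf \<omega> u u = of_real ((1+t)/2)" by (simp add: om bf_Padd bf_Pscale bf_outer uu uv vu)
  have ov: "bf \<omega> v v = of_real ((1-t)/2)" by (simp add: om bf_Padd bf_Pscale bf_outer vv uv vu)
  have ru: "bf \<rho> u u = of_real ((1+s)/2)" by (simp add: rho bf_Padd bf_Pscale bf_outer uu uv vu)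
  have rv: "bf \<rho> v v = of_real ((1-s)/2)" by (simp add: rho bf_Padd bf_Pscale bf_outer vv uv vu)
  define A1 where "A1 = Re (qf P (tens u u))"
  define A2 where "A2 = Re (qf P (tens u v))"
  define A3 where "A3 = Re (qf P (tens v u))"
  define A4 where "A4 = Re (qf P (tens v v))"
  have nn: "0 \<le> A1" "0 \<le> A2" "0 \<le> A3" "0 \<le> A4" unfolding A1_def A2_def A3_def A4_def
    using psd_qf[OF psdP] by auto
  have e1: "A1 + A2 = (1+t)/2"
    using arg_cong[OF qf_dual[OF cmp, of P u], of Re] unfolding A1_def A2_def pd ou by simp
  have e2: "A3 + A4 = (1-t)/2"
    using arg_cong[OF qf_dual[OF cmp, of P v], of Re] unfolding A3_def A4_def pd ov by simp
  have e3: "A1 + A3 = (1+s)/2"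
    using arg_cong[OF qf_H[OF cmp, of P u], of Re] unfolding A1_def A3_def pH bf_transpose ru by simp
  have e4: "A2 + A4 = (1-s)/2"
    using arg_cong[OF qf_H[OF cmp, of P v], of Re] unfolding A2_def A4_def pH bf_transpose rv by simp
  have cross: "Re (bf P (tens u u) (tens v v) + bf P (tens v v) (tens u u)) \<le> 2 * sqrt (A1 * A4)"
    unfolding A1_def A4_def by (rule cs_psd[OF psdP])
  have bid: "Re (bf P idv idv) = A1 + A4 + Re (bf P (tens u u) (tens v v) + bf P (tens v v) (tens u u))"
    unfolding idv_tens[OF cmp] A1_def A4_def by (simp add: bf_add1 bf_add2)
  have a1: "A1 \<le> x0" using e1 e3 nn unfolding x0_def by simp
  have a4: "A4 \<le> y0" using e2 e4 nn unfolding y0_def by simp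
  have "sqrt (A1 * A4) \<le> sqrt (x0 * y0)"
    by (intro real_sqrt_le_mono mult_mono a1 a4) (use nn a1 in auto)
  then have le: "Re (bf P idv idv) \<le> x0 + y0 + 2 * sqrt (x0 * y0)" using bid cross a1 a4 by linarith
  have "Re (trace (P ** C_symm p)) = 2 powr p * (2 - Re (bf P idv idv))"
    using cost_formula[OF trP, of p] by simp
  also have "\<dots> \<ge> 2 powr p * (2 - x0 - y0 - 2 * sqrt (x0 * y0))"
    by (rule mult_left_mono) (use le in auto)
  finally show ?thesis unfolding x0_def y0_def .
qed

lemma outer_add1: "outer (a + b) c = outer a c + outer b c"
  by (simp add: vec_eq_iff outer_def algebra_simps)
lemma outer_add2: "outer a (b + c) = outer a b + outer a c"
  by (simp add: vec_eq_iff outer_def algebra_simps)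
lemma outer_scale1: "outer (r *\<^sub>R a) c = r *\<^sub>R outer a c"
proof -
  have "(outer (r *\<^sub>R a) c)$i$j = (r *\<^sub>R outer a c)$i$j" for i j
    by (simp add: outer_def)
  then show ?thesis by (simp add: vec_eq_iff)
qed
lemma outer_scale2: "outer a (r *\<^sub>R c) = r *\<^sub>R outer a c"
proof -
  have "(outer a (r *\<^sub>R c))$i$j = (r *\<^sub>R outer a c)$i$j" for i j
    by (simp add: outer_def)
  then show ?thesis by (simp add: vec_eq_iff)
qed

lemma trace_outer: "trace (outer x y) = ip y x"
  unfolding trace_def outer_def ip_def by (intro sum.cong refl) (simp add: algebra_simps)

lemma trace_add': "trace (A + B) = trace A + trace (B :: complex^'n^'n)"
  by (simp add: trace_def sum.distrib)
lemma trace_scale': "trace (r *\<^sub>R A) = of_real r * trace (A :: complex^'n^'n)"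
  by (simp add: trace_def sum_distrib_left, simp add: scaleR_conv_of_real)

lemma upper:
  fixes u v :: "complex^2" and s t p :: real
  assumes uu: "ip u u = 1" and vv: "ip v v = 1" and uv: "ip u v = 0"
    and cmp: "\<forall>j l. u$j * cnj (u$l) + v$j * cnj (v$l) = (if j = l then 1 else 0)"
    and rho: "\<rho> = ((1+s)/2) *\<^sub>R outer u u + ((1-s)/2) *\<^sub>R outer v v"
    and om: "\<omega> = ((1+t)/2) *\<^sub>R outer u u + ((1-t)/2) *\<^sub>R outer v v"
    and s: "\<bar>s\<bar> \<le> 1" and t: "\<bar>t\<bar> \<le> 1"
  shows "\<exists>P \<in> couplings \<rho> \<omega>. Re (trace (P ** C_symm p)) = 2 powr p * (2 - min ((1+t)/2) ((1+s)/2) - min ((1-t)/2) ((1-s)/2)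
           - 2 * sqrt (min ((1+t)/2) ((1+s)/2) * min ((1-t)/2) ((1-s)/2)))"
proof -
  define x0 where "x0 = min ((1+t)/2) ((1+s)/2)"
  define y0 where "y0 = min ((1-t)/2) ((1-s)/2)"
  define al where "al = (1+t)/2 - x0"
  define be where "be = (1-t)/2 - y0"
  have x0: "0 \<le> x0" and y0: "0 \<le> y0" using s t unfolding x0_def y0_def by auto
  have al: "0 \<le> al" and be: "0 \<le> be" unfolding al_def be_def x0_def y0_def by (auto simp: min_def)
  have al': "al = (1-s)/2 - y0" and be': "be = (1+s)/2 - x0"
    unfolding al_def be_def x0_def y0_def by (auto simp: min_def field_simps)
  have vu: "ip v u = 0" using uv ip_cnj[of u v] by simp
  define psi where "psi = sqrt x0 *\<^sub>R tens u u + sqrt y0 *\<^sub>R tens v v"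
  define P where "P = outer psi psi + al *\<^sub>R outer (tens u v) (tens u v) + be *\<^sub>R outer (tens v u) (tens v u)"
  have psdP: "psd P" unfolding P_def
    by (intro psd_add psd_scale psd_outer al be)
  have exp: "outer psi psi = x0 *\<^sub>R outer (tens u u) (tens u u) + (sqrt x0 * sqrt y0) *\<^sub>R outer (tens u u) (tens v v)
     + (sqrt x0 * sqrt y0) *\<^sub>R outer (tens v v) (tens u u) + y0 *\<^sub>R outer (tens v v) (tens v v)"
    unfolding psi_def using x0 y0 by (simp add: outer_add1 outer_add2 outer_scale1 outer_scale2 algebra_simps)
  have pd: "ptrace_dual P = \<omega>"
    unfolding P_def exp ptrace_dual_add ptrace_dual_scale ptrace_dual_outer_tens uu vv uv vu
    by (simp add: om vec_eq_iff outer_def al_def be_def algebra_simps)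
  have pH: "ptrace_H P = transpose \<rho>"
    unfolding P_def exp ptrace_H_add ptrace_H_scale ptrace_H_outer_tens uu vv uv vu
    by (simp add: rho vec_eq_iff outer_def transpose_def al' be' algebra_simps)
  have trP: "trace P = 1"
    unfolding trace_ptrace pd om by (simp add: trace_add' trace_scale' trace_outer uu vv, simp add: field_simps)
  have i1: "ip idv psi = of_real (sqrt x0 + sqrt y0)"
    unfolding psi_def by (simp add: ip_add2 ip_scale2 ip_idv_tens uu vv)
  have i2: "ip psi idv = of_real (sqrt x0 + sqrt y0)"
    unfolding psi_def by (simp add: ip_add1 ip_scale1 ip_tens_idv uu vv)
  have "bf P idv idv = of_real ((sqrt x0 + sqrt y0)^2)"
    unfolding P_def by (simp add: bf_Padd bf_Pscale bf_outer i1 i2 ip_idv_tens ip_tens_idv uv vu power2_eq_square)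
  also have "(sqrt x0 + sqrt y0)^2 = x0 + y0 + 2 * sqrt (x0 * y0)"
    using x0 y0 by (simp add: power2_eq_square algebra_simps real_sqrt_mult)
  finally have bfv: "bf P idv idv = of_real (x0 + y0 + 2 * sqrt (x0 * y0))" .
  have "Re (trace (P ** C_symm p)) = 2 powr p * (2 - x0 - y0 - 2 * sqrt (x0 * y0))"
    using cost_formula[OF trP, of p] bfv by simp
  moreover have "P \<in> couplings \<rho> \<omega>"
    unfolding couplings_def is_state_def using psdP trP pd pH by simp
  ultimately show ?thesis unfolding x0_def y0_def by blast
qed



lemma unit3: assumes "norm (n::real^3) = 1" shows "(n$1)^2 + (n$2)^2 + (n$3)^2 = 1"
proof -
  have "inner n n = 1" using assms by (simp add: dot_square_norm)
  then show ?thesis by (simp add: inner_vec_def sum_3 power2_eq_square)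
qed

lemma bloch_entries:
  "bloch_state r $ 1 $ 1 = of_real ((1 + r$3)/2)"
  "bloch_state r $ 2 $ 2 = of_real ((1 - r$3)/2)"
  "bloch_state r $ 1 $ 2 = Complex (r$1/2) (- r$2/2)"
  "bloch_state r $ 2 $ 1 = Complex (r$1/2) (r$2/2)"
  by (simp_all add: bloch_state_def sigma1_def sigma2_def sigma3_def mat_def complex_eq_iff)

definition is_decomp :: "real^3 \<Rightarrow> complex^2 \<Rightarrow> complex^2 \<Rightarrow> bool" where
  "is_decomp n u v \<longleftrightarrow> ip u u = 1 \<and> ip v v = 1 \<and> ip u v = 0 \<and>
     (\<forall>j l. u$j * cnj (u$l) + v$j * cnj (v$l) = (if j = l then 1 else 0)) \<and>
     (\<forall>s. bloch_state (s *\<^sub>R n) = ((1+s)/2) *\<^sub>R outer u u + ((1-s)/2) *\<^sub>R outer v v)"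

lemma decomp_exists:
  assumes "norm (n::real^3) = 1"
  shows "\<exists>u v. is_decomp n u v"
proof -
  have sq: "(n$1)^2 + (n$2)^2 + (n$3)^2 = 1" using unit3[OF assms] .
  show ?thesis
  proof (cases "n$3 = -1")
    case True
    then have z: "n$1 = 0" "n$2 = 0" using sq by (auto simp: power2_eq_square)
    define u :: "complex^2" where "u = vector [0, 1]"
    define v :: "complex^2" where "v = vector [1, 0]"
    have "is_decomp n u v"
      unfolding is_decomp_def
      by (simp add: u_def v_def ip_def sum_2 forall_2 vec_eq_iff outer_def bloch_entries z True complex_eq_iff field_simps)
    then show ?thesis by blast
  next
    case False
    have n3: "1 + n$3 > 0"
    proof -
      have "(n$3)^2 \<le> 1" using sq by (smt (verit) zero_le_power2)
      then have "\<bar>n$3\<bar> \<le> 1" by (simp add: abs_square_le_1)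
      then show ?thesis using False by linarith
    qed
    define k where "k = 1 / sqrt (2 * (1 + n$3))"
    have k: "k * k * (2 + 2 * n$3) = 1" using n3 unfolding k_def
      by (simp add: field_simps)
    have h1: "k * a * (k * (1 + n$3)) = a / 2" for a using k by (simp add: algebra_simps) algebra
    have h2: "k * (1 + n$3) * (k * a) = a / 2" for a using k by (simp add: algebra_simps) algebra
    define u :: "complex^2" where "u = vector [of_real (k * (1 + n$3)), Complex (k * n$1) (k * n$2)]"
    define v :: "complex^2" where "v = vector [Complex (- k * n$1) (k * n$2), of_real (k * (1 + n$3))]"
    have "is_decomp n u v"
      unfolding is_decomp_def
      using k sq
      apply (simp add: u_def v_def ip_def sum_2 forall_2 vec_eq_iff outer_def bloch_entries complex_eq_iff)
      apply (intro conjI allI)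
      apply (simp_all only: h1 h2)
      apply (simp_all add: field_simps)
      apply algebra+
      done
    then show ?thesis by blast
  qed
qed



lemma prod_id:
  fixes s t :: real
  defines "m \<equiv> max \<bar>s\<bar> \<bar>t\<bar>"
  shows "(1 + min s t) * (1 - max s t) = (1 + (if m = 0 then 0 else s * t / m)) * (1 - m)"
proof (cases "m = 0")
  case True then show ?thesis unfolding m_def by (auto simp: max_def split: if_splits)
next
  case False
  show ?thesis
  proof (cases "\<bar>s\<bar> \<le> \<bar>t\<bar>")
    case True
    then have m: "m = \<bar>t\<bar>" unfolding m_def by simp
    have t0: "t \<noteq> 0" using False m by simp
    show ?thesis
    proof (cases "t > 0")
      case True
      then have "s * t / m = s" using m t0 by simp
      moreover have "min s t = s" "max s t = t" using \<open>\<bar>s\<bar> \<le> \<bar>t\<bar>\<close> True by auto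
      ultimately show ?thesis using False m True by simp
    next
      case False
      then have tn: "t < 0" using t0 by simp
      then have "s * t / m = - s" using m t0 by simp
      moreover have "min s t = t" "max s t = s" using \<open>\<bar>s\<bar> \<le> \<bar>t\<bar>\<close> tn by auto
      ultimately show ?thesis using \<open>m \<noteq> 0\<close> m tn by (simp add: algebra_simps)
    qed
  next
    case False
    then have m: "m = \<bar>s\<bar>" unfolding m_def by simp
    have s0: "s \<noteq> 0" using False by auto
    show ?thesis
    proof (cases "s > 0")
      case True
      then have "s * t / m = t" using m s0 by simp
      moreover have "min s t = t" "max s t = s" using \<open>\<not> \<bar>s\<bar> \<le> \<bar>t\<bar>\<close> True by auto
      ultimately show ?thesis using m True by (simp add: algebra_simps)
    next
      case False
      then have sn: "s < 0" using s0 by simp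
      then have "s * t / m = - t" using m s0 by simp
      moreover have "min s t = s" "max s t = t" using \<open>\<not> \<bar>s\<bar> \<le> \<bar>t\<bar>\<close> sn by auto
      ultimately show ?thesis using m sn by (simp add: algebra_simps)
    qed
  qed
qed

lemma value_id:
  fixes s t :: real
  assumes "\<bar>s\<bar> \<le> 1" "\<bar>t\<bar> \<le> 1"
  defines "m \<equiv> max \<bar>s\<bar> \<bar>t\<bar>"
  shows "2 - min ((1+t)/2) ((1+s)/2) - min ((1-t)/2) ((1-s)/2)
           - 2 * sqrt (min ((1+t)/2) ((1+s)/2) * min ((1-t)/2) ((1-s)/2))
        = 1 + \<bar>s - t\<bar> / 2 - sqrt ((1 + (if m = 0 then 0 else s * t / m)) * (1 - m))"
proof -
  have a: "min ((1+t)/2) ((1+s)/2) + min ((1-t)/2) ((1-s)/2) = 1 - \<bar>s - t\<bar>/2"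
    by (auto simp: min_def abs_if field_simps)
  have b: "4 * (min ((1+t)/2) ((1+s)/2) * min ((1-t)/2) ((1-s)/2)) = (1 + min s t) * (1 - max s t)"
    by (auto simp: min_def max_def field_simps)
  have "2 * sqrt (min ((1+t)/2) ((1+s)/2) * min ((1-t)/2) ((1-s)/2))
        = sqrt (4 * (min ((1+t)/2) ((1+s)/2) * min ((1-t)/2) ((1-s)/2)))"
    by (simp add: real_sqrt_mult)
  also have "\<dots> = sqrt ((1 + (if m = 0 then 0 else s * t / m)) * (1 - m))"
    unfolding b m_def by (rule arg_cong[where f = sqrt], rule prod_id)
  finally show ?thesis using a by linarith
qed

lemma amgm_aux:
  fixes x y :: real
  assumes "0 \<le> x" "0 \<le> y" "x + y \<le> 1"
  shows "0 \<le> 2 - x - y - 2 * sqrt (x * y)"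
proof -
  have "sqrt (x * y) * 2 \<le> x + y" using arith_geo_mean_sqrt[OF assms(1,2)] by (simp add: field_simps)
  then show ?thesis using assms(3) by linarith
qed

lemma value_nonneg:
  fixes s t :: real
  assumes "\<bar>s\<bar> \<le> 1" "\<bar>t\<bar> \<le> 1"
  shows "0 \<le> 2 - min ((1+t)/2) ((1+s)/2) - min ((1-t)/2) ((1-s)/2)
           - 2 * sqrt (min ((1+t)/2) ((1+s)/2) * min ((1-t)/2) ((1-s)/2))"
  by (rule amgm_aux) (use assms in \<open>auto simp: min_def field_simps\<close>)

lemma collinear_decomp:
  fixes r1 r2 :: "real^3"
  assumes "\<exists>a b. (a, b) \<noteq> (0, 0) \<and> a *\<^sub>R r1 + b *\<^sub>R r2 = 0"
  shows "\<exists>n s t. norm n = 1 \<and> r1 = s *\<^sub>R n \<and> r2 = t *\<^sub>R n"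
proof (cases "r1 = 0")
  case True
  show ?thesis
  proof (cases "r2 = 0")
    case True
    have "norm (axis 3 (1::real) :: real^3) = 1" by simp
    then show ?thesis using \<open>r1 = 0\<close> True by (intro exI[of _ "axis 3 1"] exI[of _ 0]) auto
  next
    case False
    have "norm (r2 /\<^sub>R norm r2) = 1" using False by simp
    moreover have "r2 = norm r2 *\<^sub>R (r2 /\<^sub>R norm r2)" using False by simp
    ultimately show ?thesis using \<open>r1 = 0\<close> by (intro exI[of _ "r2 /\<^sub>R norm r2"] exI[of _ 0] exI[of _ "norm r2"]) auto
  qed
next
  case False
  obtain a b where ab: "(a, b) \<noteq> (0, 0)" "a *\<^sub>R r1 + b *\<^sub>R r2 = 0" using assms by blast
  have b: "b \<noteq> 0"
  proof
    assume "b = 0"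
    then have "a \<noteq> 0" "a *\<^sub>R r1 = 0" using ab by auto
    then show False using False by simp
  qed
  have r2: "r2 = (- a / b) *\<^sub>R r1"
  proof -
    have "b *\<^sub>R r2 = - (a *\<^sub>R r1)" using ab(2) by (simp add: eq_neg_iff_add_eq_0 add.commute)
    then have "r2 = (1/b) *\<^sub>R (- (a *\<^sub>R r1))" using b by (metis scaleR_scaleR divide_self_if scaleR_one mult.commute times_divide_eq_right mult_1_right)
    then show ?thesis by (simp add: divide_inverse_commute)
  qed
  define n where "n = r1 /\<^sub>R norm r1"
  have "norm n = 1" using False unfolding n_def by simp
  moreover have "r1 = norm r1 *\<^sub>R n" using False unfolding n_def by simp
  moreover have "r2 = (- a / b * norm r1) *\<^sub>R n" using False unfolding n_def r2 by simp
  ultimately show ?thesis by blast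
qed



theorem theorem3p2:
  fixes r1 r2 :: "real^3" and p :: real
  assumes "norm r1 \<le> 1" and "norm r2 \<le> 1"
    and "\<exists>a b. (a, b) \<noteq> (0, 0) \<and> a *\<^sub>R r1 + b *\<^sub>R r2 = 0"
    and "p \<ge> 1"
  shows "(let m = max (norm r1) (norm r2) in
          D_symm p (bloch_state r1) (bloch_state r2) powr p =
          2 powr p * (1 + norm (r1 - r2) / 2
             - sqrt ((1 + (if m = 0 then 0 else inner r1 r2 / m)) * (1 - m))))"
proof -
  obtain n s t where n: "norm n = 1" and r1: "r1 = s *\<^sub>R n" and r2: "r2 = t *\<^sub>R n"
    using collinear_decomp[OF assms(3)] by blast
  obtain u v where d: "is_decomp n u v" using decomp_exists[OF n] by blast
  have uu: "ip u u = 1" and vv: "ip v v = 1" and uv: "ip u v = 0"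
    and cmp: "\<forall>j l. u$j * cnj (u$l) + v$j * cnj (v$l) = (if j = l then 1 else 0)"
    and bl: "\<And>s. bloch_state (s *\<^sub>R n) = ((1+s)/2) *\<^sub>R outer u u + ((1-s)/2) *\<^sub>R outer v v"
    using d unfolding is_decomp_def by blast+
  have ns: "norm r1 = \<bar>s\<bar>" and nt: "norm r2 = \<bar>t\<bar>" using n r1 r2 by simp_all
  have s: "\<bar>s\<bar> \<le> 1" and t: "\<bar>t\<bar> \<le> 1" using assms(1,2) ns nt by simp_all
  have ndiff: "norm (r1 - r2) = \<bar>s - t\<bar>" using n r1 r2 by (simp add: scaleR_diff_left[symmetric])
  have inn: "inner r1 r2 = s * t" using n r1 r2 by (simp add: dot_square_norm power2_eq_square)
  define V where "V = 2 - min ((1+t)/2) ((1+s)/2) - min ((1-t)/2) ((1-s)/2)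
           - 2 * sqrt (min ((1+t)/2) ((1+s)/2) * min ((1-t)/2) ((1-s)/2))"
  define S where "S = {Re (trace (P ** C_symm p)) | P. P \<in> couplings (bloch_state r1) (bloch_state r2)}"
  have rho: "bloch_state r1 = ((1+s)/2) *\<^sub>R outer u u + ((1-s)/2) *\<^sub>R outer v v" using bl r1 by simp
  have om: "bloch_state r2 = ((1+t)/2) *\<^sub>R outer u u + ((1-t)/2) *\<^sub>R outer v v" using bl r2 by simp
  obtain P0 where P0: "P0 \<in> couplings (bloch_state r1) (bloch_state r2)"
    and P0v: "Re (trace (P0 ** C_symm p)) = 2 powr p * V"
    using upper[OF uu vv uv cmp rho om s t, of p] unfolding V_def by blast
  have inf: "Inf S = 2 powr p * V"
  proof (rule cInf_eq_minimum)
    show "2 powr p * V \<in> S" unfolding S_def using P0 P0v by force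
  next
    fix x assume "x \<in> S"
    then obtain P where "P \<in> couplings (bloch_state r1) (bloch_state r2)" and x: "x = Re (trace (P ** C_symm p))"
      unfolding S_def by blast
    then show "2 powr p * V \<le> x" using lower[OF uu vv uv cmp rho om, of P p] unfolding V_def by simp
  qed
  have V0: "0 \<le> V" unfolding V_def by (rule value_nonneg[OF s t])
  have "D_symm p (bloch_state r1) (bloch_state r2) = (2 powr p * V) powr (1 / p)"
    unfolding D_symm_def inf[unfolded S_def] ..
  then have "D_symm p (bloch_state r1) (bloch_state r2) powr p = 2 powr p * V"
    using assms(4) V0 by (simp add: powr_powr)
  moreover have "V = 1 + \<bar>s - t\<bar> / 2 - sqrt ((1 + (if max \<bar>s\<bar> \<bar>t\<bar> = 0 then 0 else s * t / max \<bar>s\<bar> \<bar>t\<bar>)) * (1 - max \<bar>s\<bar> \<bar>t\<bar>))"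
    unfolding V_def by (rule value_id[OF s t])
  ultimately show ?thesis unfolding Let_def ns nt ndiff inn by simp
qed

end
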